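(* Let $p\ge2$ be an integer and let $f\in\mathcal{R}$ be nonzero with $U_pf=\lambda_pf$ for some $\lambda_p\neq0$, and let $L$ be the level of $f$ (all poles of such $f$ are roots of unity). Then for every positive integer $m$, $f$ is an eigenfunction of $U_{p+mL}$, i.e. $U_{p+mL}f=\lambda_{p+mL}f$ for some real $\lambda_{p+mL}$. In addition, $f$ is an eigenfunction of $U_q$ for infinitely many primes $q$.
   Context: $\mathcal{R}$ denotes the real vector space of rational functions $f(x)=A(x)/B(x)$ with $A,B\in\mathbb{R}[x]$, $B(0)\neq 0$ and $\deg A<\deg B$. For $f\in\mathcal{R}$ with Taylor expansion $f(x)=\sum_{n\ge0}a_nx^n$ at $0$ and a positive integer $q$, $U_qf(x)=\sum_{n\ge 0}a_{qn}x^n$. If all poles of $f$ are roots of unity, the level of $f$ is the least common multiple of the orders of these roots of unity. *)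

theory Defs
  imports "HOL-Computational_Algebra.Computational_Algebra"
begin

text \<open>An element f of the space R is represented by its Taylor expansion at 0,
  a real formal power series.  rep A B f: f = A/B with B(0) nonzero, deg A < deg B.\<close>

definition rep :: "real poly \<Rightarrow> real poly \<Rightarrow> real fps \<Rightarrow> bool" where
  "rep A B f \<longleftrightarrow> poly B 0 \<noteq> 0 \<and> degree A < degree B \<and>
     f = fps_of_poly A / fps_of_poly B"

definition inR :: "real fps \<Rightarrow> bool" where
  "inR f \<longleftrightarrow> (\<exists>A B. rep A B f)"

definition U :: "nat \<Rightarrow> real fps \<Rightarrow> real fps" where
  "U q f = Abs_fps (\<lambda>n. f $ (q * n))"

text \<open>Complex poles of f: the zeros of the denominator of every (hence of the
  reduced) representation A/B.\<close>
definition poles :: "real fps \<Rightarrow> complex set" where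
  "poles f = {z. \<forall>A B. rep A B f \<longrightarrow> poly (map_poly complex_of_real B) z = 0}"

definition root_of_unity :: "complex \<Rightarrow> bool" where
  "root_of_unity z \<longleftrightarrow> (\<exists>n::nat. n > 0 \<and> z ^ n = 1)"

definition unity_order :: "complex \<Rightarrow> nat" where
  "unity_order z = (LEAST n::nat. n > 0 \<and> z ^ n = 1)"

definition level :: "real fps \<Rightarrow> nat" where
  "level f = Lcm (unity_order ` poles f)"

definition eigenfunction :: "nat \<Rightarrow> real fps \<Rightarrow> bool" where
  "eigenfunction q f \<longleftrightarrow> (\<exists>c::real. U q f = fps_const c * f)"

end

theory Submission
  imports Defs "HOL-Number_Theory.Number_Theory" "HOL-Computational_Algebra.Field_as_Ring" "Jordan_Normal_Form.Char_Poly"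
begin


hide_const (open) up_ring.coeff up_ring.monom module.smult

interpretation rc: map_poly_inj_idom_hom "of_real :: real \<Rightarrow> complex" ..

lemma rep_iff: "rep A B f \<longleftrightarrow> poly B 0 \<noteq> 0 \<and> degree A < degree B \<and> f * fps_of_poly B = fps_of_poly A"
proof -
  have n0: "fps_of_poly B $ 0 = poly B 0" by (simp add: poly_0_coeff_0)
  show ?thesis
  proof (cases "poly B 0 = 0")
    case False
    then have B0: "fps_of_poly B \<noteq> 0" using n0 by auto
    have "f = fps_of_poly A / fps_of_poly B \<longleftrightarrow> f * fps_of_poly B = fps_of_poly A"
    proof
      assume "f = fps_of_poly A / fps_of_poly B"
      then show "f * fps_of_poly B = fps_of_poly A"
        using False n0 by (simp add: fps_divide_unit inverse_mult_eq_1 mult.assoc)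
    next
      assume "f * fps_of_poly B = fps_of_poly A"
      then show "f = fps_of_poly A / fps_of_poly B"
        using B0 by (metis fps_divide_times_eq)
    qed
    then show ?thesis unfolding rep_def by auto
  qed (auto simp: rep_def)
qed

definition Ug :: "nat \<Rightarrow> 'a::zero fps \<Rightarrow> 'a fps" where
  "Ug q F = Abs_fps (\<lambda>n. F $ (q * n))"

lemma U_Ug: "U q f = Ug q f" by (simp add: U_def Ug_def)

definition stretch :: "nat \<Rightarrow> 'a::zero fps \<Rightarrow> 'a fps" where
  "stretch p H = Abs_fps (\<lambda>k. if p dvd k then H $ (k div p) else 0)"

lemma sum_dvd_reindex:
  fixes F :: "nat \<Rightarrow> 'a::comm_monoid_add"
  assumes "p > 0"
  shows "(\<Sum>i=0..p*n. if p dvd i then F (i div p) else 0) = (\<Sum>j=0..n. F j)"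
proof -
  have "(\<Sum>i=0..p*n. if p dvd i then F (i div p) else 0) = (\<Sum>i\<in>{i\<in>{0..p*n}. p dvd i}. F (i div p))"
    by (rule sum.inter_filter[symmetric]) simp
  also have "{i\<in>{0..p*n}. p dvd i} = (\<lambda>j. p*j) ` {0..n}"
  proof
    show "{i \<in> {0..p * n}. p dvd i} \<subseteq> (\<lambda>j. p*j) ` {0..n}"
    proof
      fix i assume i: "i \<in> {i \<in> {0..p * n}. p dvd i}"
      then obtain k where k0: "i = p*k" by (auto elim: dvdE)
      then have k: "i = p*k" "p*k \<le> p*n" using i by auto
      then have "k \<le> n" using assms by simp
      then show "i \<in> (\<lambda>j. p*j) ` {0..n}" using k by auto
    qed
  qed (auto simp: assms)
  also have "(\<Sum>i\<in>(\<lambda>j. p*j) ` {0..n}. F (i div p)) = (\<Sum>j=0..n. F j)"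
    using assms by (subst sum.reindex) (auto simp: inj_on_def)
  finally show ?thesis .
qed

lemma Ug_stretch:
  fixes G H :: "'a::comm_semiring_1 fps"
  assumes "p > 0"
  shows "Ug p (stretch p H * G) = H * Ug p G"
proof (rule fps_ext)
  fix n
  have "Ug p (stretch p H * G) $ n = (\<Sum>i=0..p*n. stretch p H $ i * G $ (p*n - i))"
    by (simp add: Ug_def fps_mult_nth)
  also have "\<dots> = (\<Sum>i=0..p*n. if p dvd i then H $ (i div p) * G $ (p*n - p * (i div p)) else 0)"
    by (rule sum.cong) (auto simp: stretch_def)
  also have "\<dots> = (\<Sum>j=0..n. H $ j * G $ (p*n - p*j))"
    using sum_dvd_reindex[OF assms, of "\<lambda>j. H $ j * G $ (p*n - p*j)" n] by simp
  also have "\<dots> = (H * Ug p G) $ n"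
    by (simp add: Ug_def fps_mult_nth diff_mult_distrib2)
  finally show "Ug p (stretch p H * G) $ n = (H * Ug p G) $ n" .
qed

lemma coeff_pcompose_monom_p:
  fixes D :: "'a::comm_ring_1 poly"
  assumes "p > 0"
  shows "coeff (pcompose D (monom 1 p)) k = (if p dvd k then coeff D (k div p) else 0)"
  using assms
proof (induction D arbitrary: k)
  case 0
  then show ?case by simp
next
  case (pCons a D)
  have e: "coeff (pcompose (pCons a D) (monom 1 p)) k
      = (if k = 0 then a else 0) + (if p \<le> k then coeff (pcompose D (monom 1 p)) (k - p) else 0)"
    by (simp add: pcompose_pCons coeff_monom_mult coeff_pCons split: nat.split)
  show ?case
  proof (cases "k = 0")
    case True
    then show ?thesis using e pCons.prems by simp
  next
    case k: False
    show ?thesis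
    proof (cases "p \<le> k")
      case True
      have d: "p dvd (k - p) \<longleftrightarrow> p dvd k" using True by (simp add: dvd_minus_self)
      have q: "k div p = Suc ((k - p) div p)"
      proof -
        have "k = (k - p) + p" using True by simp
        then have "k div p = ((k - p) + p) div p" by simp
        also have "\<dots> = Suc ((k - p) div p)" using pCons.prems by simp
        finally show ?thesis .
      qed
      show ?thesis using e k True pCons.IH[OF pCons.prems, of "k - p"] d q
        by (simp add: coeff_pCons)
    next
      case False
      then have "\<not> p dvd k" using k by (auto dest: dvd_imp_le)
      then show ?thesis using e k False by simp
    qed
  qed
qed

lemma fps_of_poly_pcompose_monom:
  fixes D :: "'a::comm_ring_1 poly"
  assumes "p > 0"
  shows "fps_of_poly (pcompose D (monom 1 p)) = stretch p (fps_of_poly D)"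
  by (rule fps_ext) (simp add: coeff_pcompose_monom_p[OF assms] stretch_def)

lemma Ug_poly:
  fixes P :: "'a::comm_ring_1 poly"
  assumes "p > 0"
  shows "\<exists>E. Ug p (fps_of_poly P) = fps_of_poly E"
proof -
  define E where "E = (\<Sum>k\<le>degree P. monom (coeff P (p*k)) k)"
  have "Ug p (fps_of_poly P) = fps_of_poly E"
  proof (rule fps_ext)
    fix n
    have c: "coeff E n = (if n \<le> degree P then coeff P (p*n) else 0)"
      unfolding E_def by (simp add: coeff_sum coeff_monom)
    have "n > degree P \<Longrightarrow> coeff P (p*n) = 0"
      using assms by (intro coeff_eq_0) (metis dual_order.strict_trans1 le_square mult_le_mono1 nat_mult_1 less_one not_less mult.commute mult_le_cancel2)
    then show "Ug p (fps_of_poly P) $ n = fps_of_poly E $ n"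
      using c by (auto simp: Ug_def)
  qed
  then show ?thesis by blast
qed



definition cf :: "real fps \<Rightarrow> complex fps" where
  "cf f = Abs_fps (\<lambda>n. of_real (f $ n))"

lemma cf_mult: "cf (f * g) = cf f * cf g"
  by (rule fps_ext) (simp add: cf_def fps_mult_nth)

lemma cf_poly: "cf (fps_of_poly P) = fps_of_poly (map_poly of_real P)"
  by (rule fps_ext) (simp add: cf_def coeff_map_poly)

lemma cf_const_mult: "cf (fps_const c * f) = fps_const (of_real c) * cf f"
  by (rule fps_ext) (simp add: cf_def)

lemma Ug_cf: "Ug p (cf f) = cf (Ug p f)"
  by (rule fps_ext) (simp add: cf_def Ug_def)

lemma coprime_no_common_root:
  fixes A B :: "real poly"
  assumes "coprime A B" "poly (map_poly of_real A) z = (0::complex)"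
  shows "poly (map_poly of_real B) z \<noteq> 0"
proof
  assume B: "poly (map_poly of_real B) z = 0"
  define u where "u = fst (bezout_coefficients A B)"
  define v where "v = snd (bezout_coefficients A B)"
  have "u * A + v * B = 1"
    using bezout_coefficients_fst_snd[of A B] assms(1) by (simp add: u_def v_def coprime_iff_gcd_eq_1)
  then have "map_poly (of_real :: real \<Rightarrow> complex) (u * A + v * B) = 1" by simp
  then have "poly (map_poly (of_real :: real \<Rightarrow> complex) (u * A + v * B)) z = 1" by simp
  moreover have "poly (map_poly (of_real :: real \<Rightarrow> complex) (u * A + v * B)) z = 0"
    using assms(2) B by (simp add: rc.hom_add rc.hom_mult)
  ultimately show False by simp
qed

lemma pth_root:
  fixes A B :: "real poly" and f :: "real fps" and z :: complex
  assumes rep: "f * fps_of_poly B = fps_of_poly A" "poly B 0 \<noteq> 0"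
    and cop: "coprime A B"
    and U: "U p f = fps_const lp * f" "lp \<noteq> 0" "p > 0"
    and z: "poly (map_poly of_real B) z = 0"
  shows "\<exists>w. poly (map_poly of_real B) w = 0 \<and> z = w ^ p"
proof -
  define Bc :: "complex poly" where "Bc = map_poly of_real B"
  define Ac :: "complex poly" where "Ac = map_poly of_real A"
  have B0: "B \<noteq> 0" using rep(2) by auto
  then have Bc0: "Bc \<noteq> 0" unfolding Bc_def by simp
  obtain root where dec: "smult (lead_coeff Bc) (\<Prod>i<degree Bc. [:-root i, 1:]) = Bc"
    using complex_poly_decompose' by blast
  define n where "n = degree Bc"
  define D :: "complex poly" where "D = (\<Prod>i<n. [:-(root i ^ p), 1:])"
  define Dp where "Dp = pcompose D (monom 1 p)"
  have "(\<Prod>i<n. [:-root i, 1:]) dvd Dp"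
    unfolding Dp_def D_def pcompose_prod
  proof (rule prod_dvd_prod)
    fix i
    show "[:- root i, 1:] dvd pcompose [:- (root i ^ p), 1:] (monom 1 p)"
      by (subst poly_eq_0_iff_dvd[symmetric]) (simp add: poly_pcompose poly_monom)
  qed
  moreover have lc: "lead_coeff Bc \<noteq> 0" using Bc0 by simp
  ultimately have "smult (lead_coeff Bc) (\<Prod>i<n. [:-root i, 1:]) dvd Dp"
    by (simp add: smult_dvd_iff)
  then have "Bc dvd Dp" using dec n_def by simp
  then obtain C where C: "Dp = Bc * C" by (elim dvdE)
  have e1: "cf f * fps_of_poly Bc = fps_of_poly Ac"
    using arg_cong[OF rep(1), of cf] by (simp add: cf_mult cf_poly Bc_def Ac_def)
  have e2: "stretch p (fps_of_poly D) * cf f = fps_of_poly (Ac * C)"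
  proof -
    have "stretch p (fps_of_poly D) * cf f = cf f * fps_of_poly Dp"
      using fps_of_poly_pcompose_monom[OF U(3), of D] by (simp add: Dp_def mult.commute)
    also have "\<dots> = cf f * fps_of_poly Bc * fps_of_poly C" by (simp add: C fps_of_poly_mult mult.assoc)
    also have "\<dots> = fps_of_poly (Ac * C)" by (simp add: e1 fps_of_poly_mult)
    finally show ?thesis .
  qed
  obtain E where E: "Ug p (fps_of_poly (Ac * C)) = fps_of_poly E" using Ug_poly[OF U(3)] by blast
  have "fps_of_poly D * Ug p (cf f) = fps_of_poly E"
    using Ug_stretch[OF U(3), of "fps_of_poly D" "cf f"] e2 E by simp
  moreover have "Ug p (cf f) = fps_const (of_real lp) * cf f"
    using U(1) by (simp add: Ug_cf U_Ug[symmetric] cf_const_mult)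
  ultimately have "fps_of_poly D * fps_const (of_real lp) * cf f = fps_of_poly E"
    by (simp add: mult.assoc)
  then have "fps_of_poly D * fps_const (of_real lp) * cf f * fps_of_poly Bc = fps_of_poly E * fps_of_poly Bc"
    by simp
  then have "fps_of_poly (smult (of_real lp) (D * Ac)) = fps_of_poly (E * Bc)"
    using e1 by (simp add: fps_of_poly_mult fps_of_poly_smult mult.assoc mult.left_commute)
  then have eq: "smult (of_real lp) (D * Ac) = E * Bc" by (simp only: fps_of_poly_eq_iff)
  have "poly Bc z = 0" using z Bc_def by simp
  then have "of_real lp * poly D z * poly Ac z = 0"
    using arg_cong[OF eq, of "\<lambda>P. poly P z"] by simp
  moreover have "poly Ac z \<noteq> 0"
    using coprime_no_common_root[of B A z] cop z unfolding Ac_def by (auto simp: coprime_commute)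
  ultimately have "poly D z = 0" using U(2) by simp
  then obtain i where i: "i < n" "z = root i ^ p"
    unfolding D_def by (auto simp: poly_prod)
  have "poly Bc (root i) = 0"
  proof -
    have "poly (\<Prod>i<n. [:-root i, 1:]) (root i) = 0"
      using i(1) by (auto simp: poly_prod)
    then show ?thesis using arg_cong[OF dec, of "\<lambda>P. poly P (root i)"] n_def by simp
  qed
  then show ?thesis using i Bc_def by blast
qed

lemma roots_unity_aux:
  fixes S :: "complex set"
  assumes fin: "finite S" and nz: "0 \<notin> S" and p: "p \<ge> 2"
    and pre: "\<forall>z\<in>S. \<exists>w\<in>S. z = w ^ p"
    and zS: "z \<in> S"
  shows "root_of_unity z"
proof -
  define nxt where "nxt = (\<lambda>x. SOME w. w \<in> S \<and> x = w ^ p)"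
  have nxt: "nxt x \<in> S \<and> x = nxt x ^ p" if "x \<in> S" for x
  proof -
    have "\<exists>w. w \<in> S \<and> x = w ^ p" using pre that by blast
    then show ?thesis unfolding nxt_def by (rule someI_ex)
  qed
  define w where "w = (\<lambda>n. (nxt ^^ n) z)"
  have wS: "w n \<in> S" for n
  proof (induction n)
    case 0 then show ?case using zS by (simp add: w_def)
  next
    case (Suc n)
    have "w (Suc n) = nxt (w n)" by (simp add: w_def)
    then show ?case using nxt[OF Suc] by simp
  qed
  have wsuc: "w n = w (Suc n) ^ p" for n
  proof -
    have "w (Suc n) = nxt (w n)" by (simp add: w_def)
    then show ?thesis using nxt[OF wS[of n]] by simp
  qed
  have wk: "w n = w (n + k) ^ (p ^ k)" for n k
  proof (induction k)
    case 0 then show ?case by simp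
  next
    case (Suc k)
    have "w n = (w (Suc (n + k)) ^ p) ^ (p ^ k)" using Suc wsuc[of "n+k"] by simp
    also have "\<dots> = w (n + Suc k) ^ (p ^ Suc k)" by (simp add: power_mult[symmetric] mult.commute)
    finally show ?case .
  qed
  have rs: "range w \<subseteq> S" using wS by auto
  have finr: "finite (range w)" using finite_subset[OF rs fin] .
  have "\<not> inj w"
  proof
    assume "inj w"
    then have "finite (UNIV :: nat set)" using finite_imageD[OF finr] by blast
    then show False by simp
  qed
  then obtain i j where ij: "w i = w j" "i \<noteq> j" unfolding inj_def by blast
  obtain a b where ab: "w a = w b" "a < b"
  proof (cases "i < j")
    case True
    then show ?thesis using ij that by blast
  next
    case False
    then have "j < i" using ij by simp
    then show ?thesis using ij that[of j i] by simp
  qed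
  define k where "k = b - a"
  have k0: "k > 0" using ab k_def by simp
  have wa0: "w a \<noteq> 0" using wS[of a] nz by auto
  define m where "m = p ^ k - 1"
  have m0: "m > 0"
  proof -
    have "p ^ k \<ge> p" using k0 p by (simp add: self_le_power)
    then show ?thesis using p m_def by simp
  qed
  have pk: "p ^ k = Suc m" using m0 m_def by simp
  have h: "w a = w a ^ (p ^ k)" using wk[of a k] ab k_def by simp
  have "w a * 1 = w a * w a ^ m" using h pk by simp
  then have wam: "w a ^ m = 1" using mult_left_cancel[OF wa0, of 1 "w a ^ m"] by simp
  have "z = w a ^ (p ^ a)" using wk[of 0 a] by (simp add: w_def)
  then have "z ^ m = (w a ^ m) ^ (p ^ a)" by (simp add: power_mult[symmetric] mult.commute)
  then have "z ^ m = 1" using wam by simp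
  then show ?thesis unfolding root_of_unity_def using m0 by blast
qed

lemma reduced:
  assumes "rep A B f" "f \<noteq> 0"
  shows "\<exists>A' B'. rep A' B' f \<and> coprime A' B'"
proof -
  have r: "poly B 0 \<noteq> 0" "degree A < degree B" "f * fps_of_poly B = fps_of_poly A"
    using assms(1) by (auto simp: rep_iff)
  have B0: "B \<noteq> 0" using r(1) by auto
  have A0: "A \<noteq> 0"
  proof
    assume "A = 0"
    then have "f * fps_of_poly B = 0" using r(3) by simp
    moreover have "fps_of_poly B \<noteq> 0" using B0 by simp
    ultimately show False using assms(2) by simp
  qed
  define g where "g = gcd A B"
  define A' where "A' = A div g"
  define B' where "B' = B div g"
  have g0: "g \<noteq> 0" using B0 g_def by simp
  have A: "A = A' * g" unfolding A'_def g_def by simp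
  have B: "B = B' * g" unfolding B'_def g_def by simp
  have cop: "coprime A' B'" unfolding A'_def B'_def g_def using B0 by (intro div_gcd_coprime) simp
  have A'0: "A' \<noteq> 0" using A A0 by auto
  have B'0: "B' \<noteq> 0" using B B0 by auto
  have "poly B 0 = poly B' 0 * poly g 0" using B by simp
  then have pb: "poly B' 0 \<noteq> 0" using r(1) by auto
  have "degree A = degree A' + degree g" using A A'0 g0 by (simp add: degree_mult_eq)
  moreover have "degree B = degree B' + degree g" using B B'0 g0 by (simp add: degree_mult_eq)
  ultimately have deg: "degree A' < degree B'" using r(2) by simp
  have "f * fps_of_poly B' * fps_of_poly g = fps_of_poly A' * fps_of_poly g"
    using r(3) A B by (simp add: fps_of_poly_mult mult.assoc)
  moreover have "fps_of_poly g \<noteq> 0" using g0 by simp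
  ultimately have "f * fps_of_poly B' = fps_of_poly A'" by simp
  then have "rep A' B' f" using pb deg by (simp add: rep_iff)
  then show ?thesis using cop by blast
qed

lemma rep_dvd:
  assumes "rep A B f" "coprime A B" "rep A' B' f"
  shows "B dvd B'"
proof -
  have r: "f * fps_of_poly B = fps_of_poly A" "f * fps_of_poly B' = fps_of_poly A'"
    using assms by (auto simp: rep_iff)
  have "fps_of_poly (A * B') = fps_of_poly (A' * B)"
    by (simp add: fps_of_poly_mult r(1)[symmetric] r(2)[symmetric] mult_ac)
  then have "A * B' = A' * B" by (simp only: fps_of_poly_eq_iff)
  then have "B dvd A * B'" by simp
  moreover have "coprime B A" using assms(2) by (simp add: coprime_commute)
  ultimately show ?thesis by (simp add: coprime_dvd_mult_right_iff)
qed

lemma poles_eq: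
  assumes "rep A B f" "coprime A B"
  shows "poles f = {z. poly (map_poly of_real B) z = 0}"
proof
  show "poles f \<subseteq> {z. poly (map_poly of_real B) z = 0}"
    using assms(1) unfolding poles_def by blast
next
  show "{z. poly (map_poly of_real B) z = 0} \<subseteq> poles f"
  proof (clarsimp simp: poles_def)
    fix z A' B' assume z: "poly (map_poly complex_of_real B) z = 0" and r: "rep A' B' f"
    have "B dvd B'" using rep_dvd[OF assms r] .
    then obtain k where "B' = B * k" by (elim dvdE)
    then show "poly (map_poly complex_of_real B') z = 0" using z by (simp add: rc.hom_mult)
  qed
qed

lemma poles_unity:
  fixes f :: "real fps"
  assumes "p \<ge> 2" and "inR f" and "f \<noteq> 0"
    and "lp \<noteq> 0" and "U p f = fps_const lp * f"
  shows "\<exists>A B. rep A B f \<and> coprime A B \<and> poles f = {z. poly (map_poly of_real B) z = 0}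
      \<and> (\<forall>z\<in>poles f. root_of_unity z)"
proof -
  obtain A0 B0 where "rep A0 B0 f" using assms(2) inR_def by blast
  then obtain A B where r: "rep A B f" and cop: "coprime A B" using reduced assms(3) by blast
  have pe: "poles f = {z. poly (map_poly of_real B) z = 0}" using poles_eq[OF r cop] .
  have rr: "poly B 0 \<noteq> 0" "f * fps_of_poly B = fps_of_poly A" using r by (auto simp: rep_iff)
  define S where "S = {z. poly (map_poly (of_real :: real \<Rightarrow> complex) B) z = 0}"
  have B0: "map_poly (of_real :: real \<Rightarrow> complex) B \<noteq> 0" using rr(1) by auto
  have fin: "finite S" unfolding S_def using poly_roots_finite[OF B0] .
  have nz: "0 \<notin> S" unfolding S_def using rr(1) by (simp add: rc.poly_map_poly_0)
  have pre: "\<forall>z\<in>S. \<exists>w\<in>S. z = w ^ p"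
    using pth_root[OF rr(2) rr(1) cop assms(5) assms(4)] assms(1) unfolding S_def by auto
  have "\<forall>z\<in>S. root_of_unity z"
    using roots_unity_aux[OF fin nz assms(1) pre] by blast
  then show ?thesis using r cop pe S_def by auto
qed



lemma unity_order_props:
  assumes "root_of_unity z"
  shows "unity_order z > 0 \<and> z ^ unity_order z = 1"
proof -
  obtain n where "n > 0 \<and> z ^ n = 1" using assms unfolding root_of_unity_def by blast
  then show ?thesis unfolding unity_order_def by (rule LeastI)
qed

lemma level_props:
  assumes fin: "finite (poles f)" and ru: "\<forall>z\<in>poles f. root_of_unity z"
  shows "level f > 0 \<and> (\<forall>z\<in>poles f. z ^ level f = 1)"
proof
  have "0 \<notin> unity_order ` poles f" using ru unity_order_props by fastforce
  moreover have "finite (unity_order ` poles f)" using fin by simp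
  ultimately have "Lcm (unity_order ` poles f) \<noteq> 0" using Lcm_0_iff by blast
  then show "level f > 0" unfolding level_def by simp
next
  show "\<forall>z\<in>poles f. z ^ level f = 1"
  proof
    fix z assume z: "z \<in> poles f"
    have "unity_order z dvd level f" unfolding level_def using z by (simp add: dvd_Lcm)
    then obtain k where k: "level f = unity_order z * k" by (elim dvdE)
    have "z ^ level f = (z ^ unity_order z) ^ k" by (simp add: k power_mult)
    then show "z ^ level f = 1" using unity_order_props[of z] ru z by simp
  qed
qed

lemma degree_XL:
  assumes "L > 0"
  shows "degree (monom (1::'a::{comm_ring_1,ring_no_zero_divisors}) L - 1) = L"
proof (rule antisym)
  show "degree (monom (1::'a) L - 1) \<le> L"
    by (rule degree_diff_le) (auto simp: degree_monom_le)
  show "L \<le> degree (monom (1::'a) L - 1)"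
    using assms by (intro le_degree) (simp add: coeff_monom)
qed

lemma B_dvd_XL:
  fixes B :: "real poly"
  assumes B0: "B \<noteq> 0" and L: "L > 0"
    and roots: "\<forall>z::complex. poly (map_poly of_real B) z = 0 \<longrightarrow> z ^ L = 1"
  shows "B dvd (monom 1 L - 1) ^ degree B"
proof -
  define Bc :: "complex poly" where "Bc = map_poly of_real B"
  have Bc0: "Bc \<noteq> 0" using B0 Bc_def by simp
  obtain root where dec: "smult (lead_coeff Bc) (\<Prod>i<degree Bc. [:-root i, 1:]) = Bc"
    using complex_poly_decompose' by blast
  define n where "n = degree Bc"
  have n: "n = degree B" unfolding n_def Bc_def by simp
  have rt: "poly Bc (root i) = 0" if "i < n" for i
  proof -
    have "poly (\<Prod>i<n. [:-root i, 1:]) (root i) = 0"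
      using that by (auto simp: poly_prod)
    then show ?thesis using arg_cong[OF dec, of "\<lambda>P. poly P (root i)"] n_def by simp
  qed
  have "(\<Prod>i<n. [:-root i, 1:]) dvd (\<Prod>i<n. (monom (1::complex) L - 1))"
  proof (rule prod_dvd_prod)
    fix i assume "i \<in> {..<n}"
    then have "root i ^ L = 1" using rt[of i] roots Bc_def by auto
    then show "[:-root i, 1:] dvd monom 1 L - 1"
      by (subst poly_eq_0_iff_dvd[symmetric]) (simp add: poly_monom)
  qed
  then have "(\<Prod>i<n. [:-root i, 1:]) dvd (monom (1::complex) L - 1) ^ n" by simp
  moreover have lc: "lead_coeff Bc \<noteq> 0" using Bc0 by simp
  ultimately have "smult (lead_coeff Bc) (\<Prod>i<n. [:-root i, 1:]) dvd (monom (1::complex) L - 1) ^ n"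
    by (simp add: smult_dvd_iff)
  then have "Bc dvd (monom (1::complex) L - 1) ^ n" using dec n_def by simp
  moreover have "map_poly (of_real :: real \<Rightarrow> complex) ((monom 1 L - 1) ^ n) = (monom (1::complex) L - 1) ^ n"
    by (simp add: rc.hom_power rc.hom_minus)
  ultimately have "map_poly (of_real :: real \<Rightarrow> complex) B dvd map_poly of_real ((monom 1 L - 1) ^ n)"
    using Bc_def by simp
  then show ?thesis using n of_real_hom.dvd_map_poly_hom_imp_dvd by blast
qed

lemma poch_poly: "poly (pochhammer [:0,1:] j) x = pochhammer (x::real) j"
  by (induction j) (simp_all add: pochhammer_Suc of_nat_poly algebra_simps)

lemma poch_delta: "pochhammer (x::real) (Suc j) - pochhammer (x - 1) (Suc j) = of_nat (Suc j) * pochhammer x j"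
proof -
  have "pochhammer (x - 1) (Suc j) = (x - 1) * pochhammer x j"
    by (simp add: pochhammer_rec)
  then show ?thesis by (simp add: pochhammer_Suc algebra_simps)
qed

lemma poch_deg: "degree (pochhammer [:0,1::real:] j) = j \<and> lead_coeff (pochhammer [:0,1::real:] j) = 1"
proof (induction j)
  case 0 then show ?case by simp
next
  case (Suc j)
  have e: "pochhammer [:0,1::real:] (Suc j) = pochhammer [:0,1:] j * [:of_nat j, 1:]"
    by (simp add: pochhammer_Suc of_nat_poly)
  have nz: "pochhammer [:0,1::real:] j \<noteq> 0" using Suc by auto
  have d1: "degree (pochhammer [:0,1::real:] j * [:of_nat j, 1:]) = Suc j"
    using Suc nz by (subst degree_mult_eq) simp_all
  have lP: "lead_coeff (pochhammer [:0,1::real:] j) = 1" using Suc by blast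
  have l1: "lead_coeff (pochhammer [:0,1::real:] j * [:of_nat j, 1:]) = 1"
    by (simp only: lead_coeff_mult lP) simp
  show ?case unfolding e using d1 l1 by simp
qed

lemma antideriv: "\<exists>R. \<forall>x. poly R x - poly R (x - 1) = poly (Q::real poly) x"
proof (induction "degree Q" arbitrary: Q rule: less_induct)
  case less
  show ?case
  proof (cases "Q = 0")
    case True
    then show ?thesis by (intro exI[of _ 0]) simp
  next
    case False
    define d where "d = degree Q"
    define c where "c = lead_coeff Q"
    define P where "P = pochhammer [:0,1::real:] d"
    define R0 where "R0 = smult (c / of_nat (Suc d)) (pochhammer [:0,1::real:] (Suc d))"
    have R0: "poly R0 x - poly R0 (x - 1) = c * poly P x" for x
    proof -
      have "poly R0 x - poly R0 (x - 1) = (c / of_nat (Suc d)) * (pochhammer x (Suc d) - pochhammer (x - 1) (Suc d))"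
        by (simp add: R0_def poch_poly algebra_simps)
      also have "\<dots> = c * pochhammer x d" by (simp only: poch_delta) simp
      finally show ?thesis by (simp add: P_def poch_poly)
    qed
    define Q' where "Q' = Q - smult c P"
    have "\<exists>R'. \<forall>x. poly R' x - poly R' (x - 1) = poly Q' x"
    proof (cases "Q' = 0")
      case True
      then show ?thesis by (intro exI[of _ 0]) simp
    next
      case False
      have dP: "degree P = d" "coeff P d = 1" using poch_deg[of d] by (auto simp: P_def)
      have "degree Q' \<le> d" unfolding Q'_def
        by (rule degree_diff_le) (auto simp: d_def dP intro: order.trans[OF degree_smult_le])
      moreover have "coeff Q' d = 0" unfolding Q'_def by (simp add: dP(2) c_def d_def[symmetric])
      moreover have "degree Q' \<noteq> d"
      proof
        assume "degree Q' = d"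
        then have "lead_coeff Q' = 0" using \<open>coeff Q' d = 0\<close> by simp
        then show False using False by simp
      qed
      ultimately have "degree Q' < d" by simp
      then show ?thesis using less d_def by blast
    qed
    then obtain R' where R': "\<forall>x. poly R' x - poly R' (x - 1) = poly Q' x" by blast
    show ?thesis
    proof (intro exI[of _ "R0 + R'"] allI)
      fix x
      have "poly (R0 + R') x - poly (R0 + R') (x - 1) = (poly R0 x - poly R0 (x - 1)) + (poly R' x - poly R' (x - 1))"
        by simp
      also have "\<dots> = c * poly P x + poly Q' x" using R0 R' by simp
      also have "\<dots> = poly Q x" by (simp add: Q'_def)
      finally show "poly (R0 + R') x - poly (R0 + R') (x - 1) = poly Q x" .
    qed
  qed
qed

lemma telescope:
  fixes R :: "real poly"
  assumes "\<forall>x. poly R x - poly R (x - 1) = poly Q x"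
  shows "(\<Sum>i=Suc m..m+j. poly Q (real i)) = poly R (real (m + j)) - poly R (real m)"
proof (induction j)
  case 0 then show ?case by simp
next
  case (Suc j)
  have "poly Q (real (Suc (m + j))) = poly R (real (m + Suc j)) - poly R (real (m + j))"
    using assms[rule_format, of "real (Suc (m + j))"] by simp
  then show ?case using Suc by simp
qed

lemma coeff_mult_XL:
  fixes h :: "real fps"
  shows "(h * (fps_X ^ L - 1)) $ n = (if n < L then 0 else h $ (n - L)) - h $ n"
proof -
  have "h * (fps_X ^ L - 1) = fps_X ^ L * h - h" by (simp add: algebra_simps)
  then show ?thesis by (simp add: fps_X_power_mult_nth)
qed

lemma rec_sum:
  fixes h g :: "real fps"
  assumes "h * (fps_X ^ L - 1) = g" "r < L"
  shows "h $ (r + L * k) = - (\<Sum>i\<le>k. g $ (r + L * i))"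
proof (induction k)
  case 0
  then show ?case using coeff_mult_XL[of h L r] assms by simp
next
  case (Suc k)
  have "g $ (r + L * Suc k) = h $ (r + L * k) - h $ (r + L * Suc k)"
    using coeff_mult_XL[of h L "r + L * Suc k"] assms by simp
  then show ?case using Suc by simp
qed

lemma qp_step:
  fixes Q :: "real poly" and h g :: "real fps"
  assumes "h * (fps_X ^ L - 1) = g" "r < L" "\<forall>k\<ge>Suc m. g $ (r + L * k) = poly Q (real k)"
  shows "\<exists>Q'. \<forall>k\<ge>m. h $ (r + L * k) = poly Q' (real k)"
proof -
  obtain R where R: "\<forall>x. poly R x - poly R (x - 1) = poly Q x" using antideriv by blast
  define C where "C = (\<Sum>i\<le>m. g $ (r + L * i))"
  define Q' where "Q' = [:poly R (real m) - C:] - R"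
  have "h $ (r + L * k) = poly Q' (real k)" if "k \<ge> m" for k
  proof -
    obtain j where k: "k = m + j" using \<open>k \<ge> m\<close> le_Suc_ex by blast
    have "(\<Sum>i\<le>k. g $ (r + L * i)) = C + (\<Sum>i=Suc m..m+j. g $ (r + L * i))"
      unfolding C_def k by (rule sum_up_index_split)
    also have "(\<Sum>i=Suc m..m+j. g $ (r + L * i)) = (\<Sum>i=Suc m..m+j. poly Q (real i))"
      using assms(3) by (intro sum.cong) auto
    also have "\<dots> = poly R (real k) - poly R (real m)" using telescope[OF R] k by simp
    finally have "(\<Sum>i\<le>k. g $ (r + L * i)) = C + (poly R (real k) - poly R (real m))" .
    then show ?thesis using rec_sum[OF assms(1,2), of k] by (simp add: Q'_def)
  qed
  then show ?thesis by blast
qed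

lemma qp:
  fixes f :: "real fps" and G :: "real poly"
  assumes "f * (fps_X ^ L - 1) ^ N = fps_of_poly G" "degree G < N * L" "r < L"
  shows "\<exists>Q. \<forall>k. f $ (r + L * k) = poly Q (real k)"
proof -
  have "\<forall>t\<le>N. \<exists>Q. \<forall>k\<ge>N - t. (f * (fps_X ^ L - 1) ^ (N - t)) $ (r + L * k) = poly Q (real k)"
  proof (intro allI)
    fix t show "t \<le> N \<longrightarrow> (\<exists>Q. \<forall>k\<ge>N - t. (f * (fps_X ^ L - 1) ^ (N - t)) $ (r + L * k) = poly Q (real k))"
    proof (induction t)
      case 0
      have "(f * (fps_X ^ L - 1) ^ N) $ (r + L * k) = poly 0 (real k)" if "k \<ge> N" for k
      proof -
        have "L * N \<le> L * k" using that by (rule mult_le_mono2)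
        moreover have "degree G < L * N" using assms(2) by (simp add: mult.commute)
        ultimately have "degree G < r + L * k" by linarith
        then show ?thesis using assms(1) by (simp add: coeff_eq_0)
      qed
      then show ?case by (intro impI exI[of _ "0::real poly"]) simp
    next
      case (Suc t)
      show ?case
      proof
        assume t: "Suc t \<le> N"
        then obtain Q where Q: "\<forall>k\<ge>N - t. (f * (fps_X ^ L - 1) ^ (N - t)) $ (r + L * k) = poly Q (real k)"
          using Suc by auto
        define h where "h = f * (fps_X ^ L - 1) ^ (N - Suc t)"
        have "N - t = Suc (N - Suc t)" using t by simp
        then have hg: "h * (fps_X ^ L - 1) = f * (fps_X ^ L - 1) ^ (N - t)"
          unfolding h_def by (simp add: mult.assoc power_Suc2)
        have "\<forall>k\<ge>Suc (N - Suc t). (f * (fps_X ^ L - 1) ^ (N - t)) $ (r + L * k) = poly Q (real k)"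
          using Q t by (simp add: Suc_diff_Suc)
        from qp_step[OF hg assms(3) this] show "\<exists>Q. \<forall>k\<ge>N - Suc t. (f * (fps_X ^ L - 1) ^ (N - Suc t)) $ (r + L * k) = poly Q (real k)"
          unfolding h_def .
      qed
    qed
  qed
  from this[rule_format, of N] show ?thesis by simp
qed

lemma quasi:
  fixes f :: "real fps"
  assumes r: "rep A B f" and L: "L > 0"
    and roots: "\<forall>z::complex. poly (map_poly of_real B) z = 0 \<longrightarrow> z ^ L = 1"
  shows "\<exists>P. \<forall>n. f $ n = poly (P (n mod L)) (real n)"
proof -
  have rr: "poly B 0 \<noteq> 0" "degree A < degree B" "f * fps_of_poly B = fps_of_poly A"
    using r by (auto simp: rep_iff)
  have B0: "B \<noteq> 0" using rr(1) by auto
  define N where "N = degree B"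
  define XL :: "real poly" where "XL = monom 1 L - 1"
  have "B dvd XL ^ N" using B_dvd_XL[OF B0 L roots] by (simp add: XL_def N_def)
  then obtain Qd where Qd: "XL ^ N = B * Qd" by (elim dvdE)
  have XL0: "XL \<noteq> 0" using degree_XL[OF L, where 'a=real] L XL_def by auto
  have "degree (XL ^ N) = N * L" using degree_power_eq[OF XL0] degree_XL[OF L, where 'a=real] XL_def by simp
  moreover have Qd0: "Qd \<noteq> 0" using Qd XL0 by auto
  ultimately have "degree B + degree Qd = N * L" using Qd B0 by (simp add: degree_mult_eq)
  moreover have "degree (A * Qd) \<le> degree A + degree Qd" by (rule degree_mult_le)
  ultimately have degG: "degree (A * Qd) < N * L" using rr(2) N_def by linarith
  have fx: "fps_of_poly XL = fps_X ^ L - 1" by (simp only: XL_def fps_of_poly_diff fps_of_poly_1 fps_of_poly_monom')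
  have "f * (fps_X ^ L - 1) ^ N = fps_of_poly (A * Qd)"
  proof -
    have "f * (fps_X ^ L - 1) ^ N = f * fps_of_poly (XL ^ N)" by (simp add: fx fps_of_poly_power)
    also have "\<dots> = f * fps_of_poly B * fps_of_poly Qd" by (simp add: Qd fps_of_poly_mult mult.assoc)
    also have "\<dots> = fps_of_poly (A * Qd)" by (simp add: rr(3) fps_of_poly_mult)
    finally show ?thesis .
  qed
  then have "\<forall>r. \<exists>Q. r < L \<longrightarrow> (\<forall>k. f $ (r + L * k) = poly Q (real k))"
    using qp[OF _ degG] by blast
  then obtain Qf where Qf0: "\<forall>r. r < L \<longrightarrow> (\<forall>k. f $ (r + L * k) = poly (Qf r) (real k))"
    using choice[of "\<lambda>r Q. r < L \<longrightarrow> (\<forall>k. f $ (r + L * k) = poly Q (real k))"] by blast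
  then have Qf: "\<And>r k. r < L \<Longrightarrow> f $ (r + L * k) = poly (Qf r) (real k)" by blast
  define P where "P = (\<lambda>r. pcompose (Qf r) [:- real r / real L, 1 / real L:])"
  have "f $ n = poly (P (n mod L)) (real n)" for n
  proof -
    have n: "n = n mod L + L * (n div L)" by simp
    have "real n = real (n mod L + L * (n div L))" by simp
    also have "\<dots> = real (n mod L) + real L * real (n div L)" by (simp only: of_nat_add of_nat_mult)
    finally have "real n = real (n mod L) + real L * real (n div L)" .
    then have "(real n - real (n mod L)) / real L = real (n div L)" using L by simp
    then have "poly (P (n mod L)) (real n) = poly (Qf (n mod L)) (real (n div L))"
      by (simp add: P_def poly_pcompose diff_divide_distrib)
    also have "\<dots> = f $ (n mod L + L * (n div L))" using Qf[of "n mod L" "n div L"] L by simp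
    also have "\<dots> = f $ n" using n by simp
    finally show ?thesis by simp
  qed
  then show ?thesis by blast
qed



lemma poly_eq_infinite:
  fixes p q :: "real poly"
  assumes "infinite S" "\<forall>x\<in>S. poly p x = poly q x"
  shows "p = q"
proof (rule ccontr)
  assume "p \<noteq> q"
  then have "p - q \<noteq> 0" by simp
  then have "finite {x. poly (p - q) x = 0}" by (rule poly_roots_finite)
  moreover have "S \<subseteq> {x. poly (p - q) x = 0}" using assms(2) by auto
  ultimately show False using assms(1) finite_subset by blast
qed

lemma coeff_rel:
  fixes f :: "real fps" and P :: "nat \<Rightarrow> real poly"
  assumes quasi: "\<forall>n. f $ n = poly (P (n mod L)) (real n)" and L: "L > 0"
    and Ueq: "\<forall>n. f $ (p * n) = lp * f $ n" and r: "r < L"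
  shows "pcompose (P ((p * r) mod L)) [:0, real p:] = smult lp (P r)"
proof (rule poly_eq_infinite)
  define g where "g = (\<lambda>k::nat. real (r + L * k))"
  have ig: "inj g" unfolding g_def inj_def using L by simp
  show "infinite (range g)"
  proof
    assume "finite (range g)"
    then have "finite (UNIV :: nat set)" using finite_imageD[OF _ ig] by blast
    then show False by simp
  qed
  show "\<forall>x\<in>range g. poly (pcompose (P ((p * r) mod L)) [:0, real p:]) x = poly (smult lp (P r)) x"
  proof
    fix x assume "x \<in> range g"
    then obtain k where x: "x = real (r + L * k)" unfolding g_def by auto
    define n where "n = r + L * k"
    have nm: "n mod L = r" using r n_def by simp
    have "p * n = p * r + L * (p * k)" by (simp add: n_def algebra_simps)
    then have pm: "(p * n) mod L = (p * r) mod L" by simp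
    have "poly (pcompose (P ((p * r) mod L)) [:0, real p:]) x = poly (P ((p * n) mod L)) (real (p * n))"
      by (simp add: poly_pcompose x n_def pm[symmetric] mult.commute)
    also have "\<dots> = f $ (p * n)" using quasi by simp
    also have "\<dots> = lp * f $ n" using Ueq by simp
    also have "\<dots> = poly (smult lp (P r)) x" using quasi nm by (simp add: x n_def)
    finally show "poly (pcompose (P ((p * r) mod L)) [:0, real p:]) x = poly (smult lp (P r)) x" .
  qed
qed

lemma deg_unique:
  fixes P :: "nat \<Rightarrow> real poly"
  assumes rel: "\<forall>r<L. pcompose (P ((p * r) mod L)) [:0, real p:] = smult lp (P r)"
    and L: "L > 0" and p: "p \<ge> 2" and lp: "lp \<noteq> 0" and r: "r < L"
    and c: "coeff (P r) j \<noteq> 0"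
  shows "\<bar>lp\<bar> = real p ^ j"
proof -
  define \<sigma> where "\<sigma> = (\<lambda>r. (p * r) mod L)"
  define \<mu> where "\<mu> = lp / real p ^ j"
  have pj: "real p ^ j \<noteq> 0" using p by simp
  have one: "coeff (P (\<sigma> r')) j = \<mu> * coeff (P r') j" if "r' < L" for r'
  proof -
    have "coeff (pcompose (P (\<sigma> r')) [:0, real p:]) j = coeff (smult lp (P r')) j"
      using rel that \<sigma>_def by simp
    then have "real p ^ j * coeff (P (\<sigma> r')) j = lp * coeff (P r') j"
      by (simp add: coeff_pcompose_linear)
    then show ?thesis using pj unfolding \<mu>_def by (simp add: field_simps)
  qed
  have it: "(\<sigma> ^^ m) r' < L \<and> coeff (P ((\<sigma> ^^ m) r')) j = \<mu> ^ m * coeff (P r') j" if "r' < L" for r' m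
  proof (induction m)
    case 0 then show ?case using that by simp
  next
    case (Suc m)
    have "(\<sigma> ^^ Suc m) r' = \<sigma> ((\<sigma> ^^ m) r')" by simp
    moreover have "\<sigma> x < L" for x using L by (simp add: \<sigma>_def)
    ultimately show ?case using one[of "(\<sigma> ^^ m) r'"] Suc by simp
  qed
  define w where "w = (\<lambda>m. (\<sigma> ^^ m) r)"
  have "range w \<subseteq> {..<L}" using it[OF r] w_def by auto
  then have "finite (range w)" using finite_subset by blast
  then have "\<not> inj w"
  proof (intro notI)
    assume "finite (range w)" "inj w"
    then have "finite (UNIV :: nat set)" using finite_imageD by blast
    then show False by simp
  qed
  then obtain i j' where ij: "w i = w j'" "i \<noteq> j'" unfolding inj_def by blast
  obtain a b where ab: "w a = w b" "a < b"
  proof (cases "i < j'")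
    case True then show ?thesis using ij that by blast
  next
    case False
    then have "j' < i" using ij by simp
    then show ?thesis using ij that[of j' i] by simp
  qed
  define r' where "r' = w a"
  have r'L: "r' < L" using it[OF r] r'_def w_def by simp
  have \<mu>0: "\<mu> \<noteq> 0" using lp pj \<mu>_def by simp
  have c': "coeff (P r') j = \<mu> ^ a * coeff (P r) j" using it[OF r] r'_def w_def by simp
  then have c'0: "coeff (P r') j \<noteq> 0" using c \<mu>0 by simp
  have "w b = (\<sigma> ^^ (b - a)) r'"
  proof -
    have "b = (b - a) + a" using ab by simp
    then have "(\<sigma> ^^ b) r = (\<sigma> ^^ ((b - a) + a)) r" by simp
    also have "\<dots> = (\<sigma> ^^ (b - a)) ((\<sigma> ^^ a) r)" by (simp only: funpow_add o_apply)
    finally have "(\<sigma> ^^ b) r = (\<sigma> ^^ (b - a)) ((\<sigma> ^^ a) r)" .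
    then show ?thesis by (simp add: w_def r'_def)
  qed
  then have "coeff (P r') j = \<mu> ^ (b - a) * coeff (P r') j"
    using it[OF r'L, of "b - a"] ab r'_def by simp
  then have "\<mu> ^ (b - a) = 1" using c'0 by simp
  then have h: "\<bar>\<mu>\<bar> ^ (b - a) = 1 ^ (b - a)" by (simp add: power_abs[symmetric])
  have bpos: "0 < b - a" using ab by simp
  have "\<bar>\<mu>\<bar> = 1" using power_eq_imp_eq_base[OF h abs_ge_zero zero_le_one bpos] .
  then have "\<bar>lp\<bar> / real p ^ j = 1" unfolding \<mu>_def using lp by (simp add: abs_divide)
  then show ?thesis using lp by (simp add: divide_eq_1_iff)
qed

lemma poly_single:
  fixes P :: "real poly"
  assumes "\<forall>j. coeff P j \<noteq> 0 \<longrightarrow> j = d"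
  shows "poly P x = coeff P d * x ^ d"
proof -
  have "poly P x = (\<Sum>i\<le>degree P. coeff P i * x ^ i)" by (rule poly_altdef)
  also have "\<dots> = (\<Sum>i\<le>degree P. if i = d then coeff P d * x ^ d else 0)"
    using assms by (intro sum.cong) auto
  also have "\<dots> = coeff P d * x ^ d"
    by (auto simp: coeff_eq_0)
  finally show ?thesis .
qed

lemma eigen_final:
  fixes f :: "real fps" and P :: "nat \<Rightarrow> real poly"
  assumes quasi: "\<forall>n. f $ n = poly (P (n mod L)) (real n)" and L: "L > 0"
    and p: "p \<ge> 2" and lp: "lp \<noteq> 0"
    and Ueq: "\<forall>n. f $ (p * n) = lp * f $ n"
  shows "\<forall>m. eigenfunction (p + m * L) f"
    and "\<forall>q. q mod L = 1 mod L \<longrightarrow> eigenfunction q f"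
proof -
  have rel: "\<forall>r<L. pcompose (P ((p * r) mod L)) [:0, real p:] = smult lp (P r)"
    using coeff_rel[OF quasi L Ueq] by blast
  have du: "\<And>r j. r < L \<Longrightarrow> coeff (P r) j \<noteq> 0 \<Longrightarrow> \<bar>lp\<bar> = real p ^ j"
    using deg_unique[OF rel L p lp] by blast
  obtain d where d: "\<And>r j. r < L \<Longrightarrow> coeff (P r) j \<noteq> 0 \<Longrightarrow> j = d"
  proof (cases "\<exists>r<L. \<exists>j. coeff (P r) j \<noteq> 0")
    case True
    then obtain r0 j0 where r0: "r0 < L" "coeff (P r0) j0 \<noteq> 0" by blast
    have "j = j0" if "r < L" "coeff (P r) j \<noteq> 0" for r j
    proof -
      have "real p ^ j = real p ^ j0" using du[OF that] du[OF r0] by simp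
      moreover have "1 < real p" using p by simp
      ultimately show ?thesis by (simp add: power_inject_exp)
    qed
    then show ?thesis using that by blast
  next
    case False
    then show ?thesis using that by blast
  qed
  define c where "c = (\<lambda>r. coeff (P r) d)"
  have fn: "f $ n = c (n mod L) * real n ^ d" for n
  proof -
    have "n mod L < L" using L by simp
    then have "poly (P (n mod L)) (real n) = c (n mod L) * real n ^ d"
      unfolding c_def by (intro poly_single) (use d in blast)
    then show ?thesis using quasi by simp
  qed
  show "\<forall>m. eigenfunction (p + m * L) f"
  proof
    fix m
    define q where "q = p + m * L"
    have "U q f = fps_const ((real q / real p) ^ d * lp) * f"
    proof (rule fps_ext)
      fix n
      have qm: "(q * n) mod L = (p * n) mod L"
      proof -
        have "q * n = p * n + L * (m * n)" by (simp add: q_def algebra_simps)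
        then show ?thesis by simp
      qed
      have "U q f $ n = c ((p * n) mod L) * (real q * real n) ^ d"
        by (simp add: U_def fn qm)
      also have "\<dots> = (real q / real p) ^ d * (c ((p * n) mod L) * (real p * real n) ^ d)"
        using p by (simp add: power_mult_distrib power_divide field_simps)
      also have "c ((p * n) mod L) * (real p * real n) ^ d = lp * f $ n"
        using Ueq fn[of "p * n"] by simp
      finally show "U q f $ n = (fps_const ((real q / real p) ^ d * lp) * f) $ n" by simp
    qed
    then show "eigenfunction (p + m * L) f" unfolding eigenfunction_def q_def by blast
  qed
  show "\<forall>q. q mod L = 1 mod L \<longrightarrow> eigenfunction q f"
  proof (intro allI impI)
    fix q assume q: "q mod L = 1 mod L"
    have "U q f = fps_const (real q ^ d) * f"
    proof (rule fps_ext)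
      fix n
      have "(q * n) mod L = ((q mod L) * n) mod L" by (simp add: mod_mult_left_eq)
      also have "\<dots> = ((1 mod L) * n) mod L" using q by simp
      also have "\<dots> = n mod L" by (simp add: mod_mult_left_eq)
      finally have qm: "(q * n) mod L = n mod L" .
      have "U q f $ n = c (n mod L) * (real q * real n) ^ d"
        by (simp add: U_def fn qm)
      also have "\<dots> = real q ^ d * f $ n" by (simp add: fn power_mult_distrib)
      finally show "U q f $ n = (fps_const (real q ^ d) * f) $ n" by simp
    qed
    then show "eigenfunction q f" unfolding eigenfunction_def by blast
  qed
qed




lemma poly_diff_dvd: "(x - y) dvd (poly P x - poly (P :: int poly) y)"
proof (induction P)
  case 0 then show ?case by simp
next
  case (pCons c P)
  have "poly (pCons c P) x - poly (pCons c P) y = (x - y) * poly P x + y * (poly P x - poly P y)"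
    by (simp add: algebra_simps)
  then show ?case using pCons by simp
qed

lemma binom_sq: "\<exists>t. (x + y) ^ Suc n = x ^ Suc n + of_nat (Suc n) * x ^ n * y + y ^ 2 * (t::int)"
proof (induction n)
  case 0 then show ?case by (intro exI[of _ 0]) simp
next
  case (Suc n)
  then obtain t where t: "(x + y) ^ Suc n = x ^ Suc n + of_nat (Suc n) * x ^ n * y + y ^ 2 * t" by blast
  have "(x + y) ^ Suc (Suc n) = (x + y) * (x ^ Suc n + of_nat (Suc n) * x ^ n * y + y ^ 2 * t)"
    using t by simp
  also have "\<dots> = x ^ Suc (Suc n) + of_nat (Suc (Suc n)) * x ^ Suc n * y + y ^ 2 * (x * t + of_nat (Suc n) * x ^ n + y * t)"
    by (simp add: algebra_simps power2_eq_square)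
  finally show ?case by blast
qed

lemma cis_pow_ne_1:
  assumes "0 < k" "k < L"
  shows "cis (2 * pi / real L) ^ k \<noteq> 1"
proof
  assume "cis (2 * pi / real L) ^ k = 1"
  then have "cis (real k * (2 * pi / real L)) = 1" by (simp add: DeMoivre)
  then have "Re (cis (real k * (2 * pi / real L))) = Re 1" by (rule arg_cong)
  then have "cos (real k * (2 * pi / real L)) = 1" by simp
  then obtain n :: int where n: "real k * (2 * pi / real L) = real_of_int n * 2 * pi"
    using cos_one_2pi_int by blast
  have L0: "real L > 0" using assms by simp
  have "real k = real_of_int n * real L"
  proof -
    have "real k * (2 * pi) = real_of_int n * 2 * pi * real L"
      using n L0 by (simp add: field_simps)
    then show ?thesis by (simp add: algebra_simps)
  qed
  then have "real_of_int (int k) = real_of_int (n * int L)" by simp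
  then have kn: "int k = n * int L" by (simp only: of_int_eq_iff)
  show False
  proof (cases "n \<ge> 1")
    case True
    then have "n * int L \<ge> 1 * int L" by (intro mult_right_mono) auto
    moreover have "int k < int L" using assms by simp
    ultimately show False using kn by linarith
  next
    case False
    then have "n \<le> 0" by simp
    then have "n * int L \<le> 0" by (simp add: mult_nonpos_nonneg)
    moreover have "int k > 0" using assms by simp
    ultimately show False using kn by linarith
  qed
qed

lemma cis_pow_L: "L > 0 \<Longrightarrow> cis (2 * pi / real L) ^ L = 1"
  by (simp add: DeMoivre)

lemma primes_1_mod:
  fixes L :: nat
  assumes L: "L > 0"
  shows "infinite {q::nat. prime q \<and> q mod L = 1 mod L}"
proof -
  define PL where "PL = {l::nat. prime l \<and> l dvd L}"
  have finPL: "finite PL" unfolding PL_def using L by (auto intro: finite_subset[of _ "{..L}"] dest: dvd_imp_le)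
  define G where "G = (\<lambda>l. monom (1::int) (L div l) - 1)"
  define Pi where "Pi = (\<Prod>l\<in>PL. G l)"
  define F where "F = monom (1::int) L - 1"
  define K where "K = gcd F Pi"
  define H where "H = F div K"
  have GF: "G l dvd F" if "l \<in> PL" for l
  proof -
    have "L div l * l = L" using that PL_def by simp
    then have "F = (monom 1 (L div l)) ^ l - 1" by (simp add: F_def monom_power)
    also have "\<dots> = (monom 1 (L div l) - 1) * (\<Sum>i<l. (monom 1 (L div l)) ^ i)" by (rule power_diff_1_eq)
    finally show ?thesis by (simp add: G_def)
  qed
  have GK: "G l dvd K" if "l \<in> PL" for l
    unfolding K_def using GF[OF that] dvd_prodI[OF finPL that, of G] Pi_def by (simp add: gcd_greatest)
  have KF: "K dvd F" unfolding K_def by simp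
  have KPi: "K dvd Pi" unfolding K_def by simp
  have FHK: "F = H * K" unfolding H_def using KF by simp
  have pF0: "poly F 0 = -1" using L by (simp add: F_def poly_monom)
  then have F0: "F \<noteq> 0" by auto
  have H0: "H \<noteq> 0" using FHK F0 by auto
  have "poly H 0 * poly K 0 = -1" using FHK pF0 by simp
  then have "1 = poly H 0 * (- poly K 0)" by simp
  then have H0u: "poly H 0 dvd 1" by (rule dvdI)
  define \<zeta> where "\<zeta> = cis (2 * pi / real L)"
  have degH: "degree H > 0"
  proof (rule ccontr)
    assume "\<not> degree H > 0"
    then have "degree H = 0" by simp
    then obtain c where Hc: "H = [:c:]" by (elim degree_eq_zeroE)
    have c0: "c \<noteq> 0" using H0 Hc by simp
    have mi: "map_poly (of_int :: int \<Rightarrow> complex) (monom 1 k - 1) = monom 1 k - 1" for k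
      by (simp add: of_int_poly_hom.hom_minus)
    have "poly (map_poly (of_int :: int \<Rightarrow> complex) Pi) \<zeta> = (\<Prod>l\<in>PL. \<zeta> ^ (L div l) - 1)"
      unfolding Pi_def by (simp add: of_int_poly_hom.hom_prod G_def mi poly_prod poly_monom)
    moreover have "\<zeta> ^ (L div l) - 1 \<noteq> 0" if "l \<in> PL" for l
    proof -
      have l: "prime l" "l dvd L" using that PL_def by auto
      then have "l \<ge> 2" by (simp add: prime_ge_2_nat)
      then have "L div l < L" using L by simp
      moreover have "L div l > 0" using l L by (simp add: div_greater_zero_iff prime_gt_0_nat dvd_imp_le)
      ultimately show ?thesis using cis_pow_ne_1[of "L div l" L] \<zeta>_def by simp
    qed
    ultimately have PiZ: "poly (map_poly (of_int :: int \<Rightarrow> complex) Pi) \<zeta> \<noteq> 0"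
      using finPL by simp
    have "poly (map_poly (of_int :: int \<Rightarrow> complex) K) \<zeta> \<noteq> 0"
    proof
      assume K0: "poly (map_poly (of_int :: int \<Rightarrow> complex) K) \<zeta> = 0"
      obtain W where "Pi = K * W" using KPi by (elim dvdE)
      then have "poly (map_poly (of_int :: int \<Rightarrow> complex) Pi) \<zeta> = 0" using K0 by (simp add: of_int_poly_hom.hom_mult)
      then show False using PiZ by simp
    qed
    moreover have "poly (map_poly (of_int :: int \<Rightarrow> complex) F) \<zeta> = 0"
      using cis_pow_L[OF L] by (simp add: F_def mi poly_monom \<zeta>_def)
    ultimately have "poly (map_poly (of_int :: int \<Rightarrow> complex) H) \<zeta> = 0"
      using FHK by (simp add: of_int_poly_hom.hom_mult)
    then show False using Hc c0 by simp
  qed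
  have key: "\<not> q dvd a \<and> q mod L = 1 mod L"
    if q: "prime q" and qH: "int q dvd poly H (int a)" and La: "L dvd a" for q a :: nat
  proof -
    have nqa: "\<not> q dvd a"
    proof
      assume "q dvd a"
      then have "int q dvd int a - 0" by simp
      then have d: "int q dvd poly H (int a) - poly H 0" using poly_diff_dvd dvd_trans by blast
      have "int q dvd poly H (int a) - (poly H (int a) - poly H 0)" using dvd_diff[OF qH d] .
      then have "int q dvd poly H 0" by simp
      then have "int q dvd 1" using H0u dvd_trans by blast
      then show False using q by simp
    qed
    have cop: "coprime q a" using prime_imp_coprime[OF q nqa] .
    have qF: "int q dvd poly F (int a)" using qH FHK by simp
    then have "[int a ^ L = 1] (mod int q)" by (simp add: cong_iff_dvd_diff F_def poly_monom)
    then have aL: "[a ^ L = 1] (mod q)" using cong_int_iff[of "a ^ L" 1 q] by simp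
    define e where "e = ord q a"
    have eL: "e dvd L" using aL ord_divides e_def by blast
    have e0: "e \<noteq> 0" using cop e_def ord_eq_0 by blast
    have eq1: "e dvd q - 1" using order_divides_totient[OF cop] totient_prime[OF q] e_def by simp
    have "e = L"
    proof (rule ccontr)
      assume ne: "e \<noteq> L"
      obtain t where t: "L = e * t" using eL by (elim dvdE)
      have "t \<noteq> 1" using t ne by auto
      then obtain l where l: "prime l" "l dvd t" using prime_factor_nat by blast
      have lPL: "l \<in> PL" using l t PL_def by auto
      have "e dvd L div l"
      proof -
        obtain s where "t = l * s" using l by (elim dvdE)
        then have "L div l = e * s" using t l by (simp add: prime_gt_0_nat)
        then show ?thesis by simp
      qed
      then have "[a ^ (L div l) = 1] (mod q)" using ord_divides e_def by blast
      then have "[int a ^ (L div l) = 1] (mod int q)" using cong_int_iff[of "a ^ (L div l)" 1 q] by simp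
      then have "int q dvd poly (G l) (int a)" by (simp add: cong_iff_dvd_diff G_def poly_monom)
      moreover obtain W where "K = G l * W" using GK[OF lPL] by (elim dvdE)
      ultimately have qK: "int q dvd poly K (int a)" by (simp add: dvd_mult2)
      have qH2: "int q dvd poly H (int a + int q)"
      proof -
        have "int q dvd poly H (int a + int q) - poly H (int a)" using poly_diff_dvd[of "int a + int q" "int a" H] by simp
        from dvd_add[OF this qH] show ?thesis by simp
      qed
      have qK2: "int q dvd poly K (int a + int q)"
      proof -
        have "int q dvd poly K (int a + int q) - poly K (int a)" using poly_diff_dvd[of "int a + int q" "int a" K] by simp
        from dvd_add[OF this qK] show ?thesis by simp
      qed
      have s1: "int q * int q dvd poly F (int a)" using qH qK FHK by (simp add: mult_dvd_mono)
      have s2: "int q * int q dvd poly F (int a + int q)" using qH2 qK2 FHK by (simp add: mult_dvd_mono)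
      obtain L' where L': "L = Suc L'" using L by (cases L) auto
      obtain w where w: "(int a + int q) ^ Suc L' = int a ^ Suc L' + of_nat (Suc L') * int a ^ L' * int q + int q ^ 2 * w"
        using binom_sq by blast
      have "poly F (int a + int q) - poly F (int a) = of_nat (Suc L') * int a ^ L' * int q + int q ^ 2 * w"
        using w L' by (simp add: F_def poly_monom)
      moreover have "int q * int q dvd poly F (int a + int q) - poly F (int a)" using dvd_diff[OF s2 s1] .
      ultimately have h1: "int q * int q dvd of_nat (Suc L') * int a ^ L' * int q + int q ^ 2 * w"
        by simp
      have h2: "int q * int q dvd int q ^ 2 * w" by (simp add: power2_eq_square)
      have "int q * int q dvd of_nat (Suc L') * int a ^ L' * int q + int q ^ 2 * w - int q ^ 2 * w"
        using dvd_diff[OF h1 h2] .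
      then have "int q * int q dvd of_nat (Suc L') * int a ^ L' * int q" by simp
      then have "int q dvd int L * int a ^ L'" using q L' by (simp add: prime_gt_0_nat)
      then have "q dvd L * a ^ L'" using int_dvd_int_iff[of q "L * a ^ L'"] by simp
      then have "q dvd L \<or> q dvd a" using q by (auto simp: prime_dvd_mult_iff prime_dvd_power_iff dest: prime_dvd_power)
      then show False using nqa La dvd_trans by blast
    qed
    then have "L dvd q - 1" using eq1 by simp
    moreover have "q \<ge> 1" using q prime_ge_1_nat by blast
    ultimately have "[q = 1] (mod L)" by (simp add: cong_altdef_nat)
    then show ?thesis using nqa by (simp add: cong_def)
  qed
  show ?thesis
  proof (unfold infinite_nat_iff_unbounded, intro allI)
    fix B :: nat
    define Z where "Z = {x::int. poly (H - 1) x = 0} \<union> {x::int. poly (H + 1) x = 0}"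
    have hm1: "H - 1 \<noteq> 0"
    proof
      assume "H - 1 = 0"
      then have "H = 1" by simp
      then show False using degH by simp
    qed
    have hp1: "H + 1 \<noteq> 0"
    proof
      assume "H + 1 = 0"
      then have "H = - 1" by (simp add: eq_neg_iff_add_eq_0)
      then show False using degH by simp
    qed
    have f1: "finite {x::int. poly (H - 1) x = 0}" using poly_roots_finite[OF hm1] .
    have f2: "finite {x::int. poly (H + 1) x = 0}" using poly_roots_finite[OF hp1] .
    have finZ: "finite Z" unfolding Z_def using f1 f2 by (rule finite_UnI)
    define g where "g = (\<lambda>t::nat. int (L * fact B * Suc t))"
    have ig: "inj g" unfolding g_def inj_def using L by (simp add: fact_nonzero)
    have "infinite (range g)"
    proof
      assume "finite (range g)"
      then have "finite (UNIV :: nat set)" using finite_imageD[OF _ ig] by blast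
      then show False by simp
    qed
    then have "\<not> range g \<subseteq> Z" using finZ finite_subset by blast
    then obtain t where tZ: "g t \<notin> Z" by blast
    define a where "a = L * fact B * Suc t"
    have ga: "g t = int a" by (simp add: g_def a_def)
    have "poly H (int a) \<noteq> 1" "poly H (int a) \<noteq> -1" using tZ ga Z_def by auto
    then have "nat \<bar>poly H (int a)\<bar> \<noteq> 1" by linarith
    then obtain q where q: "prime q" "q dvd nat \<bar>poly H (int a)\<bar>" using prime_factor_nat by blast
    then have qH: "int q dvd poly H (int a)"
      by simp
    have La: "L dvd a" unfolding a_def by simp
    have kq: "\<not> q dvd a \<and> q mod L = 1 mod L" using key[OF q(1) qH La] .
    have "q > B"
    proof (rule ccontr)
      assume "\<not> q > B"
      moreover have "1 \<le> q" using prime_gt_0_nat[OF q(1)] by simp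
      ultimately have "q dvd fact B" by (intro dvd_fact) auto
      then have "q dvd a" unfolding a_def by simp
      then show False using kq by simp
    qed
    then show "\<exists>n>B. n \<in> {q. prime q \<and> q mod L = 1 mod L}" using q(1) kq by blast
  qed
qed


theorem mainTheorem7:
  fixes p :: nat and f :: "real fps" and lp :: real
  assumes "p \<ge> 2" and "inR f" and "f \<noteq> 0"
    and "lp \<noteq> 0" and "U p f = fps_const lp * f"
  shows "(\<forall>z\<in>poles f. root_of_unity z)
    \<and> (\<forall>m::nat. m > 0 \<longrightarrow> eigenfunction (p + m * level f) f)
    \<and> infinite {q::nat. prime q \<and> eigenfunction q f}"
proof -
  obtain A B where r: "rep A B f" and cop: "coprime A B"
    and pe: "poles f = {z. poly (map_poly of_real B) z = 0}"
    and ru: "\<forall>z\<in>poles f. root_of_unity z"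
    using poles_unity[OF assms] by blast
  have "poly B 0 \<noteq> 0" using r by (simp add: rep_iff)
  then have B0: "map_poly (of_real :: real \<Rightarrow> complex) B \<noteq> 0" by auto
  have fin: "finite (poles f)" unfolding pe using poly_roots_finite[OF B0] .
  define L where "L = level f"
  have L: "L > 0" and Lz: "\<forall>z\<in>poles f. z ^ L = 1" using level_props[OF fin ru] L_def by auto
  have roots: "\<forall>z::complex. poly (map_poly of_real B) z = 0 \<longrightarrow> z ^ L = 1" using Lz pe by auto
  obtain P where quasi: "\<forall>n. f $ n = poly (P (n mod L)) (real n)" using quasi[OF r L roots] by blast
  have Ueq: "\<forall>n. f $ (p * n) = lp * f $ n"
  proof
    fix n
    have "U p f $ n = (fps_const lp * f) $ n" using assms(5) by simp
    then show "f $ (p * n) = lp * f $ n" by (simp add: U_def)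
  qed
  have e1: "\<forall>m. eigenfunction (p + m * L) f" and e2: "\<forall>q. q mod L = 1 mod L \<longrightarrow> eigenfunction q f"
    using eigen_final[OF quasi L assms(1) assms(4) Ueq] by auto
  have "{q. prime q \<and> q mod L = 1 mod L} \<subseteq> {q::nat. prime q \<and> eigenfunction q f}" using e2 by auto
  then have "infinite {q::nat. prime q \<and> eigenfunction q f}" using primes_1_mod[OF L] finite_subset by blast
  then show ?thesis using ru e1 L_def by auto
qed

end
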